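(* Let $A,B,X\in T^1(\Sigma)$. Then $AX=BX$ if and only if $AX^+=BX^+$; and $XA=XB$ if and only if $X^*A=X^*B$ (all operations pruned).
   Context: Let $\Sigma$ be a set. A $\Sigma$-tree is a finite directed graph whose underlying undirected graph is a tree, edges labelled by elements of $\Sigma$, with distinguished start and end vertices such that there is a (possibly empty) directed path from start to end vertex. A morphism $X\to Y$ maps vertices to vertices and edges to edges, preserving initial vertex, terminal vertex and label of each edge, and mapping start/end vertex to start/end vertex; isomorphisms are morphisms bijective on vertices and edges. A retraction is an idempotent morphism $X\to X$, its image a retract; $X$ is pruned if it admits no non-identity retraction. Every tree $X$ has a pruned retract, unique up to isomorphism, whose isomorphism type is $\overline{X}$. $T^1(\Sigma)$ is the set of isomorphism types of pruned $\Sigma$-trees. Unpruned operations: $X\times Y$ identifies the end vertex of (a copy of) $X$ with the start vertex of (a disjoint copy of) $Y$, start vertex that of $X$, end vertex that of $Y$; $X^{(+)}$ is $X$ with end vertex moved to the start vertex; $X^{( * )}$ is $X$ with start vertex moved to the end vertex. Pruned operations: $XY=\overline{X\times Y}$, $X^+=\overline{X^{(+)}}$, $X^*=\overline{X^{( * )}}$. *)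

theory Defs
  imports Main
begin

text \<open>Since the underlying undirected graph is a tree, there are no
parallel edges, so edges are determined by such triples.  The label alphabet Sigma is
the type 'l.\<close>

record 'l stree =
  verts :: "nat set"
  edges :: "(nat \<times> 'l \<times> nat) set"
  st :: nat
  en :: nat

definition uadj :: "'l stree \<Rightarrow> (nat \<times> nat) set" where
  "uadj X = {(u, v). \<exists>a. (u, a, v) \<in> edges X \<or> (v, a, u) \<in> edges X}"

definition dadj :: "'l stree \<Rightarrow> (nat \<times> nat) set" where
  "dadj X = {(u, v). \<exists>a. (u, a, v) \<in> edges X}"

definition is_tree :: "'l stree \<Rightarrow> bool" where
  "is_tree X \<longleftrightarrow> finite (verts X) \<and> finite (edges X)
     \<and> (\<forall>(u, a, v) \<in> edges X. u \<in> verts X \<and> v \<in> verts X)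
     \<and> st X \<in> verts X \<and> en X \<in> verts X
     \<and> (\<forall>u \<in> verts X. \<forall>v \<in> verts X. (u, v) \<in> (uadj X)\<^sup>*)
     \<and> card (edges X) + 1 = card (verts X)
     \<and> (st X, en X) \<in> (dadj X)\<^sup>*"

definition emap :: "(nat \<Rightarrow> nat) \<Rightarrow> nat \<times> 'l \<times> nat \<Rightarrow> nat \<times> 'l \<times> nat" where
  "emap f = (\<lambda>(u, a, v). (f u, a, f v))"

text \<open>Morphisms (given by their vertex map; the edge map is then forced).\<close>
definition hom :: "'l stree \<Rightarrow> 'l stree \<Rightarrow> (nat \<Rightarrow> nat) \<Rightarrow> bool" where
  "hom X Y f \<longleftrightarrow> f ` verts X \<subseteq> verts Y \<and> emap f ` edges X \<subseteq> edges Y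
     \<and> f (st X) = st Y \<and> f (en X) = en Y"

definition iso :: "'l stree \<Rightarrow> 'l stree \<Rightarrow> bool" where
  "iso X Y \<longleftrightarrow> (\<exists>f. hom X Y f \<and> bij_betw f (verts X) (verts Y)
                     \<and> bij_betw (emap f) (edges X) (edges Y))"

definition retraction :: "'l stree \<Rightarrow> (nat \<Rightarrow> nat) \<Rightarrow> bool" where
  "retraction X r \<longleftrightarrow> hom X X r \<and> (\<forall>v \<in> verts X. r (r v) = r v)"

definition image_tree :: "'l stree \<Rightarrow> (nat \<Rightarrow> nat) \<Rightarrow> 'l stree" where
  "image_tree X r = \<lparr>verts = r ` verts X, edges = emap r ` edges X, st = st X, en = en X\<rparr>"

definition is_retract_of :: "'l stree \<Rightarrow> 'l stree \<Rightarrow> bool" where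
  "is_retract_of P X \<longleftrightarrow> (\<exists>r. retraction X r \<and> P = image_tree X r)"

definition pruned :: "'l stree \<Rightarrow> bool" where
  "pruned X \<longleftrightarrow> is_tree X \<and> (\<forall>r. retraction X r \<longrightarrow> (\<forall>v \<in> verts X. r v = v))"

text \<open>A chosen pruned retract (representative of the isomorphism type bar X).\<close>
definition prune :: "'l stree \<Rightarrow> 'l stree" where
  "prune X = (SOME P. is_retract_of P X \<and> pruned P)"

text \<open>Unpruned product: disjoint copies (X on even, Y on odd numbers), gluing the end
vertex of X to the start vertex of Y.\<close>
definition glueY :: "'l stree \<Rightarrow> 'l stree \<Rightarrow> nat \<Rightarrow> nat" where
  "glueY X Y v = (if v = st Y then 2 * en X else 2 * v + 1)"

definition tprod :: "'l stree \<Rightarrow> 'l stree \<Rightarrow> 'l stree" where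
  "tprod X Y = \<lparr>verts = (\<lambda>v. 2 * v) ` verts X \<union> glueY X Y ` verts Y,
                 edges = emap (\<lambda>v. 2 * v) ` edges X \<union> emap (glueY X Y) ` edges Y,
                 st = 2 * st X, en = glueY X Y (en Y)\<rparr>"

definition tplus_u :: "'l stree \<Rightarrow> 'l stree" where
  "tplus_u X = X\<lparr>en := st X\<rparr>"

definition tstar_u :: "'l stree \<Rightarrow> 'l stree" where
  "tstar_u X = X\<lparr>st := en X\<rparr>"

definition pmult :: "'l stree \<Rightarrow> 'l stree \<Rightarrow> 'l stree" where
  "pmult X Y = prune (tprod X Y)"

definition pplus :: "'l stree \<Rightarrow> 'l stree" where
  "pplus X = prune (tplus_u X)"

definition pstar :: "'l stree \<Rightarrow> 'l stree" where
  "pstar X = prune (tstar_u X)"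

end

theory Submission
  imports Defs
begin

definition gmap :: "'l stree \<Rightarrow> 'l stree \<Rightarrow> (nat \<Rightarrow> nat) \<Rightarrow> bool" where
  "gmap X Y f \<longleftrightarrow> f ` verts X \<subseteq> verts Y \<and> emap f ` edges X \<subseteq> edges Y"

definition heq :: "'l stree \<Rightarrow> 'l stree \<Rightarrow> bool" where
  "heq S T \<longleftrightarrow> (\<exists>f. hom S T f) \<and> (\<exists>g. hom T S g)"

definition Eind :: "'l stree \<Rightarrow> nat set \<Rightarrow> (nat \<times> 'l \<times> nat) set" where
  "Eind G S = {(u, a, v). (u, a, v) \<in> edges G \<and> u \<in> S \<and> v \<in> S}"

lemma emap_apply[simp]: "emap f (u, a, v) = (f u, a, f v)"
  by (simp add: emap_def)

lemma emap_comp: "emap (g \<circ> f) = emap g \<circ> emap f"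
  by (auto simp: emap_def fun_eq_iff)

lemma emap_id: "emap id = id" "emap (\<lambda>x. x) = id"
  by (auto simp: emap_def fun_eq_iff)

lemma hom_gmap: "hom X Y f \<longleftrightarrow> gmap X Y f \<and> f (st X) = st Y \<and> f (en X) = en Y"
  by (auto simp: hom_def gmap_def)

lemma gmap_comp: "gmap X Y f \<Longrightarrow> gmap Y Z g \<Longrightarrow> gmap X Z (g \<circ> f)"
  unfolding gmap_def emap_comp image_comp[symmetric] by (meson image_mono subset_trans)

lemma hom_comp: "hom X Y f \<Longrightarrow> hom Y Z g \<Longrightarrow> hom X Z (g \<circ> f)"
  unfolding hom_gmap using gmap_comp by fastforce

lemma hom_id: "hom X X id"
  by (simp add: hom_def emap_id)

lemma heq_refl: "heq X X" using hom_id unfolding heq_def by blast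
lemma heq_sym: "heq X Y \<Longrightarrow> heq Y X" unfolding heq_def by blast
lemma heq_trans: "heq X Y \<Longrightarrow> heq Y Z \<Longrightarrow> heq X Z" unfolding heq_def using hom_comp by blast

lemma relpow_map:
  assumes "emap f ` edges X \<subseteq> edges Y" "(x, y) \<in> (dadj X) ^^ n"
  shows "(f x, f y) \<in> (dadj Y) ^^ n"
  using assms(2)
proof (induction n arbitrary: y)
  case 0
  then show ?case by simp
next
  case (Suc n)
  then obtain z where z: "(x, z) \<in> (dadj X) ^^ n" "(z, y) \<in> dadj X" by auto
  then obtain a where "(z, a, y) \<in> edges X" by (auto simp: dadj_def)
  then have "(f z, a, f y) \<in> edges Y" using assms(1) by force
  then have "(f z, f y) \<in> dadj Y" by (auto simp: dadj_def)
  with Suc.IH[OF z(1)] show ?case by auto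
qed

lemma dadj_rtrancl_map:
  assumes "emap f ` edges X \<subseteq> edges Y" "(x, y) \<in> (dadj X)\<^sup>*"
  shows "(f x, f y) \<in> (dadj Y)\<^sup>*"
  using assms relpow_map by (metis rtrancl_power)

lemma uadj_rtrancl_map:
  assumes "emap f ` edges X \<subseteq> edges Y" "(x, y) \<in> (uadj X)\<^sup>*"
  shows "(f x, f y) \<in> (uadj Y)\<^sup>*"
  using assms(2)
proof (induction rule: rtrancl_induct)
  case base
  then show ?case by simp
next
  case (step y z)
  then obtain a where "(y, a, z) \<in> edges X \<or> (z, a, y) \<in> edges X" by (auto simp: uadj_def)
  then have "(f y, a, f z) \<in> edges Y \<or> (f z, a, f y) \<in> edges Y" using assms(1) by force
  then have "(f y, f z) \<in> uadj Y" by (auto simp: uadj_def)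
  with step.IH show ?case by (meson rtrancl_into_rtrancl)
qed

lemma sym_uadj: "sym (uadj X)"
  by (auto simp: uadj_def sym_def)

lemma cross:
  assumes "(a, b) \<in> R\<^sup>*" "a \<in> S" "b \<notin> S"
  shows "\<exists>x y. (x, y) \<in> R \<and> x \<in> S \<and> y \<notin> S"
  using assms by (induction rule: rtrancl_induct) auto

definition graphok :: "'l stree \<Rightarrow> bool" where
  "graphok G \<longleftrightarrow> finite (verts G) \<and> finite (edges G)
     \<and> (\<forall>(u, a, v) \<in> edges G. u \<in> verts G \<and> v \<in> verts G)
     \<and> (\<forall>u \<in> verts G. \<forall>v \<in> verts G. (u, v) \<in> (uadj G)\<^sup>*)"

lemma tree_graphok: "is_tree X \<Longrightarrow> graphok X"
  by (simp add: is_tree_def graphok_def)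

lemma cross_edge:
  assumes "graphok G" "S \<subseteq> verts G" "S \<noteq> {}" "S \<noteq> verts G"
  shows "\<exists>u a v x. (u, a, v) \<in> edges G \<and> x \<in> verts G \<and> x \<notin> S
            \<and> ((u \<in> S \<and> v = x) \<or> (v \<in> S \<and> u = x))"
proof -
  obtain s where s: "s \<in> S" using assms(3) by blast
  obtain y where y: "y \<in> verts G" "y \<notin> S" using assms(2,4) by blast
  have "(s, y) \<in> (uadj G)\<^sup>*" using assms(1,2) s y unfolding graphok_def by blast
  then obtain p q where pq: "(p, q) \<in> uadj G" "p \<in> S" "q \<notin> S" using cross s y by metis
  then obtain a where e: "(p, a, q) \<in> edges G \<or> (q, a, p) \<in> edges G" by (auto simp: uadj_def)
  then have "q \<in> verts G" using assms(1) unfolding graphok_def by blast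
  from e show ?thesis
  proof
    assume "(p, a, q) \<in> edges G"
    then show ?thesis using pq \<open>q \<in> verts G\<close> by blast
  next
    assume "(q, a, p) \<in> edges G"
    then show ?thesis using pq \<open>q \<in> verts G\<close> by blast
  qed
qed

lemma Eind_sub: "Eind G S \<subseteq> edges G" by (auto simp: Eind_def)

lemma Eind_all: "graphok G \<Longrightarrow> Eind G (verts G) = edges G"
  by (auto simp: Eind_def graphok_def)

lemma grow:
  assumes "graphok G" "S \<subseteq> verts G" "S \<noteq> {}"
  shows "card (verts G) + card (Eind G S) \<le> card (edges G) + card S"
  using assms(2,3)
proof (induction "card (verts G - S)" arbitrary: S rule: less_induct)
  case less
  have finV: "finite (verts G)" and finE: "finite (edges G)" using assms(1) by (auto simp: graphok_def)
  show ?case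
  proof (cases "S = verts G")
    case True
    then show ?thesis using Eind_all[OF assms(1)] by simp
  next
    case False
    then obtain u a v x where e: "(u, a, v) \<in> edges G" "x \<in> verts G" "x \<notin> S"
      "(u \<in> S \<and> v = x) \<or> (v \<in> S \<and> u = x)"
      using cross_edge[OF assms(1) less.prems] by blast
    let ?S' = "insert x S"
    have lt: "card (verts G - ?S') < card (verts G - S)"
    proof -
      have "verts G - ?S' = (verts G - S) - {x}" by blast
      moreover have "x \<in> verts G - S" using e(2,3) by blast
      ultimately show ?thesis using card_Diff1_less[of "verts G - S" x] finV by simp
    qed
    have IH: "card (verts G) + card (Eind G ?S') \<le> card (edges G) + card ?S'"
      using less.hyps[OF lt] less.prems e(2) by blast
    have finS: "finite S" using less.prems finV finite_subset by blast
    have "insert (u, a, v) (Eind G S) \<subseteq> Eind G ?S'" using e less.prems by (auto simp: Eind_def)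
    moreover have "(u, a, v) \<notin> Eind G S" using e by (auto simp: Eind_def)
    moreover have "finite (Eind G ?S')" using finE Eind_sub finite_subset by metis
    ultimately have "card (Eind G S) + 1 \<le> card (Eind G ?S')"
      by (metis Suc_eq_plus1 card_insert_disjoint card_mono finE Eind_sub finite_subset)
    moreover have "card ?S' = card S + 1" using finS e(3) by simp
    ultimately show ?thesis using IH by linarith
  qed
qed

lemma forest:
  assumes "is_tree T" "S \<subseteq> verts T" "S \<noteq> {}"
  shows "card (Eind T S) + 1 \<le> card S"
  using grow[OF tree_graphok[OF assms(1)] assms(2,3)] assms(1) unfolding is_tree_def by linarith

lemma no_loop:
  assumes "is_tree T" "(u, a, u) \<in> edges T"
  shows False
proof -
  have u: "u \<in> verts T" using assms unfolding is_tree_def by blast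
  have "(u, a, u) \<in> Eind T {u}" using assms by (auto simp: Eind_def)
  moreover have "finite (Eind T {u})" using assms(1) Eind_sub finite_subset unfolding is_tree_def by metis
  ultimately have "card (Eind T {u}) \<ge> 1" by (metis One_nat_def Suc_leI card_gt_0_iff empty_iff)
  with forest[OF assms(1), of "{u}"] u show False by simp
qed

lemma level:
  assumes T: "is_tree T"
  shows "\<exists>\<phi>::nat \<Rightarrow> int. \<forall>(u, a, v) \<in> edges T. \<phi> v = \<phi> u + 1"
proof -
  have G: "graphok T" using tree_graphok[OF T] .
  have finV: "finite (verts T)" and finE: "finite (edges T)" and stV: "st T \<in> verts T"
    using T by (auto simp: is_tree_def)
  have claim: "n < card (verts T) \<longrightarrow> (\<exists>S (\<phi>::nat \<Rightarrow> int). S \<subseteq> verts T \<and> card S = Suc n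
      \<and> card (Eind T S) = n \<and> (\<forall>(u, a, v) \<in> Eind T S. \<phi> v = \<phi> u + 1))" for n
  proof (induction n)
    case 0
    have "card (Eind T {st T}) + 1 \<le> 1" using forest[OF T, of "{st T}"] stV by simp
    then have "card (Eind T {st T}) = 0" by simp
    moreover have "finite (Eind T {st T})" using finE Eind_sub finite_subset by metis
    ultimately have "Eind T {st T} = {}" by simp
    then show ?case using stV \<open>card (Eind T {st T}) = 0\<close> by (intro impI exI[of _ "{st T}"]) auto
  next
    case (Suc n)
    show ?case
    proof
      assume lt: "Suc n < card (verts T)"
      then obtain S and \<phi> :: "nat \<Rightarrow> int" where S: "S \<subseteq> verts T" "card S = Suc n"
        "card (Eind T S) = n" "\<forall>(u, a, v) \<in> Eind T S. \<phi> v = \<phi> u + 1"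
        using Suc.IH by auto
      have finS: "finite S" using S(1) finV finite_subset by blast
      have Sne: "S \<noteq> {}" using S(2) by auto
      have SV: "S \<noteq> verts T" using S(2) lt by auto
      obtain u a v x where e: "(u, a, v) \<in> edges T" "x \<in> verts T" "x \<notin> S"
        "(u \<in> S \<and> v = x) \<or> (v \<in> S \<and> u = x)"
        using cross_edge[OF G S(1) Sne SV] by blast
      define \<psi> where "\<psi> = \<phi>(x := (if v = x then \<phi> u + 1 else \<phi> v - 1))"
      let ?S' = "insert x S"
      have cS': "card ?S' = Suc (Suc n)" using finS e(3) S(2) by simp
      have S'V: "?S' \<subseteq> verts T" using S(1) e(2) by blast
      have sub: "insert (u, a, v) (Eind T S) \<subseteq> Eind T ?S'" using e S(1) by (auto simp: Eind_def)
      have notin: "(u, a, v) \<notin> Eind T S" using e by (auto simp: Eind_def)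
      have finE': "finite (Eind T ?S')" using finE Eind_sub finite_subset by metis
      have finES: "finite (Eind T S)" using finE Eind_sub finite_subset by metis
      have c1: "card (insert (u, a, v) (Eind T S)) = Suc n" using finES notin S(3) by simp
      have "card (Eind T ?S') + 1 \<le> Suc (Suc n)" using forest[OF T S'V] cS' by simp
      moreover have "Suc n \<le> card (Eind T ?S')" using card_mono[OF finE' sub] c1 by simp
      ultimately have c2: "card (Eind T ?S') = Suc n" by simp
      have eq: "insert (u, a, v) (Eind T S) = Eind T ?S'"
        using card_subset_eq[OF finE' sub] c1 c2 by simp
      have cons: "\<forall>(p, b, q) \<in> Eind T ?S'. \<psi> q = \<psi> p + 1"
      proof (intro ballI, clarify)
        fix p b q assume pq: "(p, b, q) \<in> Eind T ?S'"
        then have "(p, b, q) = (u, a, v) \<or> (p, b, q) \<in> Eind T S" using eq by blast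
        then show "\<psi> q = \<psi> p + 1"
        proof
          assume "(p, b, q) = (u, a, v)"
          then show ?thesis using e(3,4) by (auto simp: \<psi>_def)
        next
          assume h: "(p, b, q) \<in> Eind T S"
          then have "p \<in> S" "q \<in> S" by (auto simp: Eind_def)
          then have "p \<noteq> x" "q \<noteq> x" using e(3) by auto
          then show ?thesis using S(4) h by (auto simp: \<psi>_def)
        qed
      qed
      show "\<exists>S (\<phi>::nat \<Rightarrow> int). S \<subseteq> verts T \<and> card S = Suc (Suc n)
          \<and> card (Eind T S) = Suc n \<and> (\<forall>(u, a, v) \<in> Eind T S. \<phi> v = \<phi> u + 1)"
        using S'V cS' c2 cons by blast
    qed
  qed
  have "card (verts T) > 0" using finV stV card_gt_0_iff by blast
  then obtain S and \<phi> :: "nat \<Rightarrow> int" where S: "S \<subseteq> verts T" "card S = card (verts T)"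
        "\<forall>(u, a, v) \<in> Eind T S. \<phi> v = \<phi> u + 1"
    using claim[of "card (verts T) - 1"] by auto
  have "S = verts T" using card_subset_eq[OF finV S(1) S(2)] .
  then show ?thesis using S(3) Eind_all[OF G] by auto
qed

lemma level_relpow:
  assumes "\<forall>(u, a, v) \<in> edges T. (\<phi>::nat \<Rightarrow> int) v = \<phi> u + 1" "(x, y) \<in> (dadj T) ^^ n"
  shows "\<phi> y = \<phi> x + int n"
  using assms(2)
proof (induction n arbitrary: y)
  case 0
  then show ?case by simp
next
  case (Suc n)
  then obtain z where z: "(x, z) \<in> (dadj T) ^^ n" "(z, y) \<in> dadj T" by auto
  then obtain a where "(z, a, y) \<in> edges T" by (auto simp: dadj_def)
  then have "\<phi> y = \<phi> z + 1" using assms(1) by blast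
  with Suc.IH[OF z(1)] show ?case by simp
qed

lemma image_tree_simps[simp]:
  "verts (image_tree X r) = r ` verts X" "edges (image_tree X r) = emap r ` edges X"
  "st (image_tree X r) = st X" "en (image_tree X r) = en X"
  by (simp_all add: image_tree_def)

lemma retract_homs:
  assumes "retraction X r"
  shows "hom X (image_tree X r) r" "hom (image_tree X r) X id"
  using assms by (auto simp: retraction_def hom_def emap_id)

lemma retract_tree:
  assumes T: "is_tree X" and R: "retraction X r"
  shows "is_tree (image_tree X r)"
proof -
  let ?I = "image_tree X r"
  have h: "r ` verts X \<subseteq> verts X" "emap r ` edges X \<subseteq> edges X" "r (st X) = st X" "r (en X) = en X"
    using R by (auto simp: retraction_def hom_def)
  have finV: "finite (verts X)" and finE: "finite (edges X)"
    and ein: "\<forall>(u, a, v) \<in> edges X. u \<in> verts X \<and> v \<in> verts X"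
    and stV: "st X \<in> verts X" and enV: "en X \<in> verts X"
    and conn: "\<forall>u \<in> verts X. \<forall>v \<in> verts X. (u, v) \<in> (uadj X)\<^sup>*"
    and dp: "(st X, en X) \<in> (dadj X)\<^sup>*"
    using T by (auto simp: is_tree_def)
  have ein': "\<forall>(u, a, v) \<in> edges ?I. u \<in> verts ?I \<and> v \<in> verts ?I"
    using ein by auto
  have stI: "st ?I \<in> verts ?I" using stV h(3) by (metis image_eqI image_tree_simps(1,3))
  have enI: "en ?I \<in> verts ?I" using enV h(4) by (metis image_eqI image_tree_simps(1,4))
  have conn': "\<forall>u \<in> verts ?I. \<forall>v \<in> verts ?I. (u, v) \<in> (uadj ?I)\<^sup>*"
  proof (intro ballI)
    fix p q assume "p \<in> verts ?I" "q \<in> verts ?I"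
    then obtain u w where "u \<in> verts X" "w \<in> verts X" "p = r u" "q = r w" by auto
    moreover have "emap r ` edges X \<subseteq> edges ?I" by simp
    ultimately show "(p, q) \<in> (uadj ?I)\<^sup>*" using uadj_rtrancl_map conn by metis
  qed
  have dp': "(st ?I, en ?I) \<in> (dadj ?I)\<^sup>*"
    using dadj_rtrancl_map[of r X ?I, OF _ dp] h(3,4) by simp
  have G: "graphok ?I" using finV finE ein' conn' by (simp add: graphok_def)
  have "card (verts ?I) + card (Eind ?I {st ?I}) \<le> card (edges ?I) + card {st ?I}"
    using grow[OF G, of "{st ?I}"] stI by blast
  then have c1: "card (verts ?I) \<le> card (edges ?I) + 1" by simp
  have sub: "edges ?I \<subseteq> Eind X (r ` verts X)"
    using h(2) ein by (force simp: Eind_def)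
  have "card (Eind X (r ` verts X)) + 1 \<le> card (r ` verts X)"
    using forest[OF T h(1)] stV by blast
  moreover have "card (edges ?I) \<le> card (Eind X (r ` verts X))"
    using card_mono[OF _ sub] finE Eind_sub finite_subset by metis
  ultimately have c2: "card (edges ?I) + 1 \<le> card (verts ?I)" by simp
  show ?thesis unfolding is_tree_def
    using finV finE ein' stI enI conn' c1 c2 dp' by auto
qed

lemma exists_pruned_retract:
  assumes T: "is_tree X"
  shows "\<exists>P. is_retract_of P X \<and> pruned P"
proof -
  have "retraction X id" by (simp add: retraction_def hom_id)
  then obtain r where r: "retraction X r"
    and rmin: "\<forall>r'. retraction X r' \<longrightarrow> card (r ` verts X) \<le> card (r' ` verts X)"
    using ex_has_least_nat[of "retraction X" id "\<lambda>r. card (r ` verts X)"] by blast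
  let ?P = "image_tree X r"
  have finV: "finite (verts X)" using T by (simp add: is_tree_def)
  have fixr: "\<forall>v \<in> verts X. r (r v) = r v" using r by (simp add: retraction_def)
  have "pruned ?P"
    unfolding pruned_def
  proof (intro conjI allI impI ballI)
    show "is_tree ?P" using retract_tree[OF T r] .
    fix s v assume s: "retraction ?P s" and v: "v \<in> verts ?P"
    show "s v = v"
    proof (rule ccontr)
      assume ne: "s v \<noteq> v"
      have hs: "hom ?P ?P s" and sid: "\<forall>w \<in> verts ?P. s (s w) = s w" using s by (auto simp: retraction_def)
      have "hom X X (id \<circ> (s \<circ> r))"
        using hom_comp[OF hom_comp[OF retract_homs(1)[OF r] hs] retract_homs(2)[OF r]] .
      then have ht: "hom X X (s \<circ> r)" by simp
      have sV: "s ` verts ?P \<subseteq> verts ?P" using hs by (simp add: hom_def)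
      have "retraction X (s \<circ> r)"
        unfolding retraction_def
      proof (intro conjI ht ballI)
        fix w assume w: "w \<in> verts X"
        have "s (r w) \<in> r ` verts X" using sV w by auto
        then have "r (s (r w)) = s (r w)" using fixr by auto
        moreover have "s (s (r w)) = s (r w)" using sid w by auto
        ultimately show "(s \<circ> r) ((s \<circ> r) w) = (s \<circ> r) w" by simp
      qed
      then have "card (r ` verts X) \<le> card ((s \<circ> r) ` verts X)" using rmin by blast
      also have "(s \<circ> r) ` verts X = s ` verts ?P" by (simp add: image_comp)
      finally have c: "card (verts ?P) \<le> card (s ` verts ?P)" by simp
      have finP: "finite (verts ?P)" using finV by simp
      have "card (s ` verts ?P) \<le> card (verts ?P)" using card_image_le[OF finP] .
      with c have "card (s ` verts ?P) = card (verts ?P)" by linarith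
      then have "inj_on s (verts ?P)" using eq_card_imp_inj_on[OF finP] by blast
      moreover have "s v \<in> verts ?P" using sV v by blast
      moreover have "s (s v) = s v" using sid v by blast
      ultimately show False using ne v by (meson inj_onD)
    qed
  qed
  then show ?thesis using r unfolding is_retract_of_def by blast
qed

lemma prune_props:
  assumes "is_tree X"
  shows "pruned (prune X)" "heq (prune X) X"
proof -
  have "is_retract_of (prune X) X \<and> pruned (prune X)"
    unfolding prune_def using someI_ex[OF exists_pruned_retract[OF assms]] .
  then obtain r where "retraction X r" "prune X = image_tree X r" "pruned (prune X)"
    unfolding is_retract_of_def by blast
  then show "pruned (prune X)" "heq (prune X) X"
    using retract_homs unfolding heq_def by metis+
qed

lemma pruned_endo_inj:
  assumes P: "pruned P" and f: "hom P P f"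
  shows "inj_on f (verts P)"
proof -
  let ?V = "verts P"
  have T: "is_tree P" using P by (simp add: pruned_def)
  have finV: "finite ?V" and finE: "finite (edges P)"
    and ein: "\<forall>(u, a, v) \<in> edges P. u \<in> ?V \<and> v \<in> ?V"
    using T by (auto simp: is_tree_def)
  obtain g where g: "hom P P g" and gmin: "\<forall>g'. hom P P g' \<longrightarrow> card (g ` ?V) \<le> card (g' ` ?V)"
    using ex_has_least_nat[of "hom P P" f "\<lambda>g. card (g ` ?V)"] f by blast
  define M where "M = g ` ?V"
  have gV: "g ` ?V \<subseteq> ?V" and gE: "emap g ` edges P \<subseteq> edges P"
    and gst: "g (st P) = st P" and gen: "g (en P) = en P" using g by (auto simp: hom_def)
  have MV: "M \<subseteq> ?V" using gV M_def by simp
  have finM: "finite M" using MV finV finite_subset by blast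
  have gM: "g ` M \<subseteq> M" using gV M_def by auto
  have "card M \<le> card ((g \<circ> g) ` ?V)" using gmin hom_comp[OF g g] M_def by blast
  also have "(g \<circ> g) ` ?V = g ` M" by (simp add: M_def image_comp)
  finally have cM: "card M \<le> card (g ` M)" .
  have "card (g ` M) \<le> card M" using card_image_le[OF finM] .
  with cM have "card (g ` M) = card M" by linarith
  then have injM: "inj_on g M" using eq_card_imp_inj_on[OF finM] by blast
  have gMeq: "g ` M = M" using card_subset_eq[OF finM gM] \<open>card (g ` M) = card M\<close> by simp
  define r where "r = (\<lambda>v. inv_into M g (g v))"
  have rM: "v \<in> ?V \<Longrightarrow> r v \<in> M" for v
  proof -
    assume "v \<in> ?V"
    then have "g v \<in> g ` M" using gMeq M_def by auto
    then show "r v \<in> M" unfolding r_def by (rule inv_into_into)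
  qed
  have rfix: "v \<in> M \<Longrightarrow> r v = v" for v
    unfolding r_def using inv_into_f_f[OF injM] by blast
  have EM: "emap g ` Eind P M = Eind P M"
  proof -
    have sub: "emap g ` Eind P M \<subseteq> Eind P M"
      using gE gM by (force simp: Eind_def)
    have "inj_on (emap g) (Eind P M)"
      using injM by (auto simp: inj_on_def Eind_def)
    moreover have finEM: "finite (Eind P M)" using finE Eind_sub finite_subset by metis
    ultimately have "card (emap g ` Eind P M) = card (Eind P M)" by (simp add: card_image)
    then show ?thesis using card_subset_eq[OF finEM sub] by simp
  qed
  have rE: "emap r ` edges P \<subseteq> edges P"
  proof
    fix e assume "e \<in> emap r ` edges P"
    then obtain u a w where e: "e = (r u, a, r w)" "(u, a, w) \<in> edges P" by auto
    then have uw: "u \<in> ?V" "w \<in> ?V" using ein by auto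
    have "(g u, a, g w) \<in> Eind P M" using e(2) gE uw M_def by (force simp: Eind_def)
    then obtain d where d: "d \<in> Eind P M" "emap g d = (g u, a, g w)"
      using EM by (metis imageE)
    obtain x b y where "d = (x, b, y)" by (cases d) auto
    with d have xy: "(x, a, y) \<in> Eind P M" "g x = g u" "g y = g w" by auto
    have "x \<in> M" "y \<in> M" using xy(1) by (auto simp: Eind_def)
    then have "r u = x" "r w = y" using rfix xy(2,3) unfolding r_def by metis+
    then show "e \<in> edges P" using e xy(1) by (auto simp: Eind_def)
  qed
  have stM: "st P \<in> M" using gst T M_def by (metis image_eqI is_tree_def)
  have enM: "en P \<in> M" using gen T M_def by (metis image_eqI is_tree_def)
  have "retraction P r"
    unfolding retraction_def hom_def
    using rM MV rE rfix stM enM by auto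
  then have "\<forall>v \<in> ?V. r v = v" using P by (simp add: pruned_def)
  then have "?V \<subseteq> M" using rM by force
  then have "card M = card ?V" using MV by auto
  moreover have "card M \<le> card (f ` ?V)" using gmin f M_def by blast
  moreover have "card (f ` ?V) \<le> card ?V" using card_image_le[OF finV] .
  ultimately have "card (f ` ?V) = card ?V" by linarith
  then show ?thesis using eq_card_imp_inj_on[OF finV] by blast
qed

lemma emap_inj:
  assumes "inj_on f (verts P)" "\<forall>(u, a, v) \<in> edges P. u \<in> verts P \<and> v \<in> verts P"
  shows "inj_on (emap f) (edges P)"
proof (rule inj_onI)
  fix d e assume d: "d \<in> edges P" and e: "e \<in> edges P" and eq: "emap f d = emap f e"
  obtain u a v where d': "d = (u, a, v)" by (cases d) auto
  obtain u' a' v' where e': "e = (u', a', v')" by (cases e) auto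
  have "u \<in> verts P" "v \<in> verts P" "u' \<in> verts P" "v' \<in> verts P"
    using assms(2) d e d' e' by auto
  moreover have "f u = f u'" "a = a'" "f v = f v'" using eq d' e' by auto
  ultimately show "d = e" using assms(1) d' e' by (auto dest: inj_onD)
qed

lemma pruned_iso:
  assumes P: "pruned P" and Q: "pruned Q" and f: "hom P Q f" and g: "hom Q P g"
  shows "iso P Q"
proof -
  have TP: "is_tree P" and TQ: "is_tree Q" using P Q by (auto simp: pruned_def)
  have fP: "finite (verts P)" "finite (edges P)" and eP: "\<forall>(u, a, v) \<in> edges P. u \<in> verts P \<and> v \<in> verts P"
    using TP by (auto simp: is_tree_def)
  have fQ: "finite (verts Q)" "finite (edges Q)" and eQ: "\<forall>(u, a, v) \<in> edges Q. u \<in> verts Q \<and> v \<in> verts Q"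
    using TQ by (auto simp: is_tree_def)
  have fV: "f ` verts P \<subseteq> verts Q" and fE: "emap f ` edges P \<subseteq> edges Q" using f by (auto simp: hom_def)
  have gV: "g ` verts Q \<subseteq> verts P" and gE: "emap g ` edges Q \<subseteq> edges P" using g by (auto simp: hom_def)
  have if1: "inj_on f (verts P)" using pruned_endo_inj[OF P hom_comp[OF f g]] inj_on_imageI2 by blast
  have ig1: "inj_on g (verts Q)" using pruned_endo_inj[OF Q hom_comp[OF g f]] inj_on_imageI2 by blast
  have c1: "card (verts P) \<le> card (verts Q)" using card_inj_on_le[OF if1 fV fQ(1)] .
  have c2: "card (verts Q) \<le> card (verts P)" using card_inj_on_le[OF ig1 gV fP(1)] .
  have "card (f ` verts P) = card (verts Q)" using c1 c2 card_image[OF if1] by simp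
  then have "f ` verts P = verts Q" using card_subset_eq[OF fQ(1) fV] by simp
  then have bv: "bij_betw f (verts P) (verts Q)" using if1 by (simp add: bij_betw_def)
  have ief: "inj_on (emap f) (edges P)" using emap_inj[OF if1 eP] .
  have ieg: "inj_on (emap g) (edges Q)" using emap_inj[OF ig1 eQ] .
  have d1: "card (edges P) \<le> card (edges Q)" using card_inj_on_le[OF ief fE fQ(2)] .
  have d2: "card (edges Q) \<le> card (edges P)" using card_inj_on_le[OF ieg gE fP(2)] .
  have "card (emap f ` edges P) = card (edges Q)" using d1 d2 card_image[OF ief] by simp
  then have "emap f ` edges P = edges Q" using card_subset_eq[OF fQ(2) fE] by simp
  then have be: "bij_betw (emap f) (edges P) (edges Q)" using ief by (simp add: bij_betw_def)
  show ?thesis unfolding iso_def using f bv be by blast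
qed

lemma iso_back:
  assumes "iso P Q" "is_tree P"
  shows "\<exists>g. hom Q P g"
proof -
  obtain f where f: "hom P Q f" "bij_betw f (verts P) (verts Q)" "bij_betw (emap f) (edges P) (edges Q)"
    using assms(1) by (auto simp: iso_def)
  have eP: "\<forall>(u, a, v) \<in> edges P. u \<in> verts P \<and> v \<in> verts P"
    and stP: "st P \<in> verts P" and enP: "en P \<in> verts P" using assms(2) by (auto simp: is_tree_def)
  define g where "g = inv_into (verts P) f"
  have inj: "inj_on f (verts P)" using f(2) by (simp add: bij_betw_def)
  have gV: "g ` verts Q \<subseteq> verts P" unfolding g_def using f(2)
    by (metis bij_betw_def image_subsetI inv_into_into)
  have gE: "emap g ` edges Q \<subseteq> edges P"
  proof
    fix e' assume "e' \<in> emap g ` edges Q"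
    then obtain e where e: "e' = emap g e" "e \<in> edges Q" by auto
    then obtain d where d: "d \<in> edges P" "e = emap f d" using f(3) unfolding bij_betw_def by blast
    obtain u a w where "d = (u, a, w)" by (cases d) auto
    with d eP have "u \<in> verts P" "w \<in> verts P" by auto
    then have "g (f u) = u" "g (f w) = w" unfolding g_def using inv_into_f_f[OF inj] by auto
    then show "e' \<in> edges P" using e d \<open>d = (u, a, w)\<close> by simp
  qed
  have "g (st Q) = st P" "g (en Q) = en P"
    using f(1) stP enP inv_into_f_f[OF inj] unfolding g_def hom_def by metis+
  then show ?thesis using gV gE unfolding hom_def by blast
qed

lemma prune_iso_iff:
  assumes "is_tree S" "is_tree T"
  shows "iso (prune S) (prune T) \<longleftrightarrow> heq S T"
proof
  have pS: "pruned (prune S)" "heq (prune S) S" and pT: "pruned (prune T)" "heq (prune T) T"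
    using prune_props assms by blast+
  {
    assume i: "iso (prune S) (prune T)"
    then obtain f where "hom (prune S) (prune T) f" by (auto simp: iso_def)
    moreover obtain g where "hom (prune T) (prune S) g"
      using iso_back[OF i] pS(1) by (auto simp: pruned_def)
    ultimately have "heq (prune S) (prune T)" by (auto simp: heq_def)
    then show "heq S T" using heq_trans heq_sym pS(2) pT(2) by metis
  }
  {
    assume "heq S T"
    then have "heq (prune S) (prune T)" using heq_trans heq_sym pS(2) pT(2) by metis
    then show "iso (prune S) (prune T)" using pruned_iso pS(1) pT(1) by (auto simp: heq_def)
  }
qed

lemma tprod_simps[simp]:
  "verts (tprod P Q) = (\<lambda>v. 2 * v) ` verts P \<union> glueY P Q ` verts Q"
  "edges (tprod P Q) = emap (\<lambda>v. 2 * v) ` edges P \<union> emap (glueY P Q) ` edges Q"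
  "st (tprod P Q) = 2 * st P" "en (tprod P Q) = glueY P Q (en Q)"
  by (simp_all add: tprod_def)

lemma glueY_st[simp]: "glueY P Q (st Q) = 2 * en P"
  by (simp add: glueY_def)

lemma glueY_ne: "v \<noteq> st Q \<Longrightarrow> glueY P Q v = 2 * v + 1"
  by (simp add: glueY_def)

lemma glueY_even: "even (glueY P Q v) \<longleftrightarrow> v = st Q"
  by (simp add: glueY_def)

lemma glueY_inj: "inj (glueY P Q)"
  by (rule injI) (auto simp: glueY_def split: if_splits, presburger+)

lemma double_inj: "inj (\<lambda>v::nat. 2 * v)"
  by (rule injI) simp

lemma gmap_left: "gmap P (tprod P Q) (\<lambda>v. 2 * v)"
  by (simp add: gmap_def)

lemma gmap_right: "gmap Q (tprod P Q) (glueY P Q)"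
  by (simp add: gmap_def)

lemma tree_walk: "is_tree X \<Longrightarrow> \<exists>n. (st X, en X) \<in> (dadj X) ^^ n"
  by (simp add: is_tree_def rtrancl_power)

lemma tprod_tree:
  assumes TP: "is_tree P" and TQ: "is_tree Q"
  shows "is_tree (tprod P Q)"
proof -
  let ?T = "tprod P Q"
  let ?g = "2 * en P"
  have fP: "finite (verts P)" "finite (edges P)" and eP: "\<forall>(u, a, v) \<in> edges P. u \<in> verts P \<and> v \<in> verts P"
    and sP: "st P \<in> verts P" "en P \<in> verts P" and cP: "\<forall>u \<in> verts P. \<forall>v \<in> verts P. (u, v) \<in> (uadj P)\<^sup>*"
    and kP: "card (edges P) + 1 = card (verts P)" and dP: "(st P, en P) \<in> (dadj P)\<^sup>*"
    using TP by (auto simp: is_tree_def)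
  have fQ: "finite (verts Q)" "finite (edges Q)" and eQ: "\<forall>(u, a, v) \<in> edges Q. u \<in> verts Q \<and> v \<in> verts Q"
    and sQ: "st Q \<in> verts Q" "en Q \<in> verts Q" and cQ: "\<forall>u \<in> verts Q. \<forall>v \<in> verts Q. (u, v) \<in> (uadj Q)\<^sup>*"
    and kQ: "card (edges Q) + 1 = card (verts Q)" and dQ: "(st Q, en Q) \<in> (dadj Q)\<^sup>*"
    using TQ by (auto simp: is_tree_def)
  have gl: "emap (\<lambda>v. 2 * v) ` edges P \<subseteq> edges ?T" and gr: "emap (glueY P Q) ` edges Q \<subseteq> edges ?T"
    by auto
  have fin: "finite (verts ?T)" "finite (edges ?T)" using fP fQ by auto
  have ein: "\<forall>(u, a, v) \<in> edges ?T. u \<in> verts ?T \<and> v \<in> verts ?T"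
    using eP eQ by fastforce
  have stT: "st ?T \<in> verts ?T" using sP by simp
  have enT: "en ?T \<in> verts ?T" using sQ by simp
  have toG: "(v, ?g) \<in> (uadj ?T)\<^sup>*" if v: "v \<in> verts ?T" for v
  proof -
    from v consider x where "x \<in> verts P" "v = 2 * x" | y where "y \<in> verts Q" "v = glueY P Q y" by auto
    then show ?thesis
    proof cases
      case 1
      then have "(x, en P) \<in> (uadj P)\<^sup>*" using cP sP by blast
      then show ?thesis using uadj_rtrancl_map[OF gl] 1 by blast
    next
      case 2
      then have "(y, st Q) \<in> (uadj Q)\<^sup>*" using cQ sQ by blast
      then show ?thesis using uadj_rtrancl_map[OF gr] 2 by fastforce
    qed
  qed
  have symT: "sym ((uadj ?T)\<^sup>*)" using sym_rtrancl[OF sym_uadj] .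
  have conn: "\<forall>u \<in> verts ?T. \<forall>v \<in> verts ?T. (u, v) \<in> (uadj ?T)\<^sup>*"
  proof (intro ballI)
    fix u v assume "u \<in> verts ?T" "v \<in> verts ?T"
    then have "(u, ?g) \<in> (uadj ?T)\<^sup>*" "(?g, v) \<in> (uadj ?T)\<^sup>*" using toG symT by (auto dest: symD)
    then show "(u, v) \<in> (uadj ?T)\<^sup>*" by simp
  qed
  have dp: "(st ?T, en ?T) \<in> (dadj ?T)\<^sup>*"
  proof -
    have "(2 * st P, ?g) \<in> (dadj ?T)\<^sup>*" using dadj_rtrancl_map[OF gl dP] .
    moreover have "(glueY P Q (st Q), glueY P Q (en Q)) \<in> (dadj ?T)\<^sup>*" using dadj_rtrancl_map[OF gr dQ] .
    ultimately show ?thesis by simp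
  qed
  have injl: "inj (\<lambda>v::nat. 2 * v)" by (rule double_inj)
  have injr: "inj (glueY P Q)" by (rule glueY_inj)
  have Int: "(\<lambda>v. 2 * v) ` verts P \<inter> glueY P Q ` verts Q = {?g}"
  proof
    show "(\<lambda>v. 2 * v) ` verts P \<inter> glueY P Q ` verts Q \<subseteq> {?g}"
    proof
      fix z assume "z \<in> (\<lambda>v. 2 * v) ` verts P \<inter> glueY P Q ` verts Q"
      then have z1: "z \<in> (\<lambda>v. 2 * v) ` verts P" and z2: "z \<in> glueY P Q ` verts Q" by auto
      from z1 obtain x where "z = 2 * x" by blast
      from z2 obtain y where "z = glueY P Q y" by blast
      from \<open>z = 2 * x\<close> \<open>z = glueY P Q y\<close> have "even (glueY P Q y)" by simp
      then have "y = st Q" using glueY_even by blast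
      then show "z \<in> {?g}" using \<open>z = glueY P Q y\<close> by simp
    qed
  next
    show "{?g} \<subseteq> (\<lambda>v. 2 * v) ` verts P \<inter> glueY P Q ` verts Q"
      using sP sQ by (auto intro!: image_eqI[of _ _ "st Q"])
  qed
  have cv1: "card ((\<lambda>v. 2 * v) ` verts P) = card (verts P)"
    using card_image injl by (metis inj_on_subset subset_UNIV)
  have cv2: "card (glueY P Q ` verts Q) = card (verts Q)"
    using card_image injr by (metis inj_on_subset subset_UNIV)
  have "card ((\<lambda>v. 2 * v) ` verts P) + card (glueY P Q ` verts Q)
      = card (verts ?T) + card ((\<lambda>v. 2 * v) ` verts P \<inter> glueY P Q ` verts Q)"
    using card_Un_Int[of "(\<lambda>v. 2 * v) ` verts P" "glueY P Q ` verts Q"] fP fQ by simp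
  then have cV: "card (verts P) + card (verts Q) = card (verts ?T) + 1"
    using cv1 cv2 Int by simp
  have ce1: "card (emap (\<lambda>v. 2 * v) ` edges P) = card (edges P)"
    using card_image[OF emap_inj[OF inj_on_subset[OF injl subset_UNIV] eP]] .
  have ce2: "card (emap (glueY P Q) ` edges Q) = card (edges Q)"
    using card_image[OF emap_inj[OF inj_on_subset[OF injr subset_UNIV] eQ]] .
  have disj: "emap (\<lambda>v. 2 * v) ` edges P \<inter> emap (glueY P Q) ` edges Q = {}"
  proof (rule ccontr)
    assume "emap (\<lambda>v. 2 * v) ` edges P \<inter> emap (glueY P Q) ` edges Q \<noteq> {}"
    then obtain u a w x b y where "(u, a, w) \<in> edges P" "(x, b, y) \<in> edges Q"
      "(2 * u, a, 2 * w) = (glueY P Q x, b, glueY P Q y)" by force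
    then have "even (glueY P Q x)" "even (glueY P Q y)" by (metis Pair_inject dvd_triv_left)+
    then have "x = st Q" "y = st Q" using glueY_even by blast+
    then show False using no_loop[OF TQ] \<open>(x, b, y) \<in> edges Q\<close> by blast
  qed
  have cE: "card (edges ?T) = card (edges P) + card (edges Q)"
    using card_Un_disjoint[OF _ _ disj] fP fQ ce1 ce2 by simp
  have "card (edges ?T) + 1 = card (verts ?T)" using cE cV kP kQ by linarith
  then show ?thesis unfolding is_tree_def using fin ein stT enT conn dp by blast
qed

lemma tprod_hom_out:
  assumes g1: "gmap P T fa" "fa (st P) = st T" and g2: "gmap Q T fb" "fb (en Q) = en T"
    and m: "fa (en P) = fb (st Q)"
  shows "hom (tprod P Q) T (\<lambda>w. if even w then fa (w div 2) else fb (w div 2))"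
proof -
  define h where "h = (\<lambda>w. if even w then fa (w div 2) else fb (w div 2))"
  have h1: "h (2 * v) = fa v" for v by (simp add: h_def)
  have h2: "h (glueY P Q v) = fb v" for v
    by (cases "v = st Q") (simp_all add: h_def glueY_ne m)
  have e1: "emap h (emap (\<lambda>v. 2 * v) e) = emap fa e" for e
    by (cases e) (simp add: h1)
  have e2: "emap h (emap (glueY P Q) e) = emap fb e" for e
    by (cases e) (simp add: h2)
  have "h ` verts (tprod P Q) \<subseteq> verts T"
    using g1 g2 by (auto simp: gmap_def h1 h2)
  moreover have "emap h ` edges (tprod P Q) \<subseteq> edges T"
  proof
    fix e assume "e \<in> emap h ` edges (tprod P Q)"
    then consider d where "d \<in> edges P" "e = emap h (emap (\<lambda>v. 2 * v) d)"
      | d where "d \<in> edges Q" "e = emap h (emap (glueY P Q) d)" by auto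
    then show "e \<in> edges T"
      by cases (use g1 g2 e1 e2 in \<open>auto simp: gmap_def\<close>)
  qed
  ultimately show ?thesis unfolding h_def[symmetric] hom_def using g1 g2 h1 h2 by simp
qed

lemma tprod_plus: "tprod A (tplus_u X) = (tprod A X)\<lparr>en := 2 * en A\<rparr>"
proof -
  have "glueY A (tplus_u X) = glueY A X" by (simp add: glueY_def tplus_u_def fun_eq_iff)
  then show ?thesis by (simp add: tprod_def tplus_u_def)
qed

lemma tprod_star: "tprod (tstar_u X) A = (tprod X A)\<lparr>st := 2 * en X\<rparr>"
proof -
  have "glueY (tstar_u X) A = glueY X A" by (simp add: glueY_def tstar_u_def fun_eq_iff)
  then show ?thesis by (simp add: tprod_def tstar_u_def)
qed

lemma uadj_upd[simp]: "uadj (X\<lparr>en := e\<rparr>) = uadj X" "uadj (X\<lparr>st := e\<rparr>) = uadj X"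
  by (simp_all add: uadj_def)

lemma dadj_upd[simp]: "dadj (X\<lparr>en := e\<rparr>) = dadj X" "dadj (X\<lparr>st := e\<rparr>) = dadj X"
  by (simp_all add: dadj_def)

lemma tplus_tree: "is_tree X \<Longrightarrow> is_tree (tplus_u X)"
  by (simp add: is_tree_def tplus_u_def)

lemma tstar_tree: "is_tree X \<Longrightarrow> is_tree (tstar_u X)"
  by (simp add: is_tree_def tstar_u_def)

lemma cong_right:
  assumes "hom Y Y' g"
  shows "\<exists>h. hom (tprod A Y) (tprod A Y') h"
proof -
  have "gmap Y (tprod A Y') (glueY A Y' \<circ> g)"
    using gmap_comp assms gmap_right hom_gmap by blast
  moreover have "g (en Y) = en Y'" "g (st Y) = st Y'" using assms by (auto simp: hom_def)
  ultimately show ?thesis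
    using tprod_hom_out[where P=A and T="tprod A Y'" and fa="\<lambda>v. 2*v" and Q=Y and fb="glueY A Y' \<circ> g"]
      gmap_left[of A Y'] by auto
qed

lemma cong_left:
  assumes "hom A A' g"
  shows "\<exists>h. hom (tprod A Y) (tprod A' Y) h"
proof -
  have "gmap A (tprod A' Y) ((\<lambda>v. 2 * v) \<circ> g)"
    using gmap_comp assms gmap_left hom_gmap by blast
  moreover have "g (en A) = en A'" "g (st A) = st A'" using assms by (auto simp: hom_def)
  ultimately show ?thesis
    using tprod_hom_out[where P=A and T="tprod A' Y" and fa="(\<lambda>v. 2 * v) \<circ> g" and Q=Y and fb="glueY A' Y"]
      gmap_right[of Y A'] by auto
qed

lemma heq_cong_right: "heq Y Y' \<Longrightarrow> heq (tprod A Y) (tprod A Y')"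
  unfolding heq_def using cong_right by blast

lemma heq_cong_left: "heq A A' \<Longrightarrow> heq (tprod A Y) (tprod A' Y)"
  unfolding heq_def using cong_left by blast

lemma tprod_edge_parity:
  assumes "(x, a, v) \<in> edges (tprod P Q)" "even x" "odd v"
  shows "x = 2 * en P"
proof -
  from assms(1) consider u w where "(u, a, w) \<in> edges P" "x = 2 * u" "v = 2 * w"
    | y z where "(y, a, z) \<in> edges Q" "x = glueY P Q y" "v = glueY P Q z" by auto
  then show ?thesis
  proof cases
    case 1
    then show ?thesis using assms(3) by simp
  next
    case 2
    then have "y = st Q" using assms(2) glueY_even by blast
    then show ?thesis using 2 by simp
  qed
qed

lemma cut:
  assumes "(u, v) \<in> (dadj (tprod P Q)) ^^ k" "even u" "odd v"
  shows "\<exists>j\<le>k. (u, 2 * en P) \<in> (dadj (tprod P Q)) ^^ j \<and> (2 * en P, v) \<in> (dadj (tprod P Q)) ^^ (k - j)"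
  using assms(1,3)
proof (induction k arbitrary: v)
  case 0
  then show ?case using assms(2) by simp
next
  case (Suc k)
  then obtain x where x: "(u, x) \<in> (dadj (tprod P Q)) ^^ k" "(x, v) \<in> dadj (tprod P Q)" by auto
  then obtain a where ea: "(x, a, v) \<in> edges (tprod P Q)" by (auto simp: dadj_def)
  show ?case
  proof (cases "odd x")
    case True
    then obtain j where j: "j \<le> k" "(u, 2 * en P) \<in> (dadj (tprod P Q)) ^^ j"
      "(2 * en P, x) \<in> (dadj (tprod P Q)) ^^ (k - j)" using Suc.IH[OF x(1)] by blast
    have "(2 * en P, v) \<in> (dadj (tprod P Q)) ^^ Suc (k - j)" using relpow_Suc_I[OF j(3) x(2)] .
    moreover have "Suc k - j = Suc (k - j)" using j(1) by simp
    ultimately show ?thesis using j by (intro exI[of _ j]) auto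
  next
    case False
    then have "x = 2 * en P" using tprod_edge_parity[OF ea] Suc.prems(2) by simp
    moreover have "(x, v) \<in> (dadj (tprod P Q)) ^^ Suc 0" using x(2) by simp
    ultimately show ?thesis using x(1) by (intro exI[of _ k]) auto
  qed
qed

lemma glue_fixed:
  assumes TP: "is_tree P" and TQ: "is_tree Q"
    and w1: "(st (tprod P Q), w) \<in> (dadj (tprod P Q)) ^^ n"
    and g1: "(st (tprod P Q), 2 * en P) \<in> (dadj (tprod P Q)) ^^ n"
    and w2: "(w, en (tprod P Q)) \<in> (dadj (tprod P Q)) ^^ m"
  shows "w = 2 * en P"
proof (rule ccontr)
  assume ne: "w \<noteq> 2 * en P"
  let ?T = "tprod P Q"
  obtain \<phi> :: "nat \<Rightarrow> int" where phi: "\<forall>(u, a, v) \<in> edges ?T. \<phi> v = \<phi> u + 1"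
    using level[OF tprod_tree[OF TP TQ]] by blast
  have a: "\<phi> w = \<phi> (st ?T) + int n" using level_relpow[OF phi w1] .
  have b: "\<phi> (2 * en P) = \<phi> (st ?T) + int n" using level_relpow[OF phi g1] .
  show False
  proof (cases "even w")
    case False
    obtain j where j: "j \<le> n" "(st ?T, 2 * en P) \<in> (dadj ?T) ^^ j" "(2 * en P, w) \<in> (dadj ?T) ^^ (n - j)"
      using cut[where u="st ?T" and v=w and k=n and P=P and Q=Q] w1 False by auto
    have "\<phi> (2 * en P) = \<phi> (st ?T) + int j" using level_relpow[OF phi j(2)] .
    with b have "j = n" by simp
    with j(3) have "w = 2 * en P" by simp
    with ne show False by simp
  next
    case True
    show False
    proof (cases "en Q = st Q")
      case True
      then have "en ?T = 2 * en P" by simp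
      then have "\<phi> (2 * en P) = \<phi> w + int m" using level_relpow[OF phi w2] by simp
      with a b have "m = 0" by simp
      with w2 \<open>en ?T = 2 * en P\<close> have "w = 2 * en P" by simp
      with ne show False by simp
    next
      case False
      then have "odd (en ?T)" using glueY_even[of P Q "en Q"] by simp
      then obtain j where j: "j \<le> m" "(w, 2 * en P) \<in> (dadj ?T) ^^ j"
        using cut[where u=w and v="en ?T" and k=m and P=P and Q=Q] w2 \<open>even w\<close> by auto
      have "\<phi> (2 * en P) = \<phi> w + int j" using level_relpow[OF phi j(2)] .
      with a b have "j = 0" by simp
      with j(2) have "w = 2 * en P" by simp
      with ne show False by simp
    qed
  qed
qed

lemma plus_fix:
  assumes TA: "is_tree A" and TB: "is_tree B" and TX: "is_tree X"
    and f: "hom (tprod A X) (tprod B X) f"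
  shows "f (2 * en A) = 2 * en B"
proof -
  obtain nA where wA: "(st A, en A) \<in> (dadj A) ^^ nA" using tree_walk[OF TA] by blast
  obtain nB where wB: "(st B, en B) \<in> (dadj B) ^^ nB" using tree_walk[OF TB] by blast
  obtain m where wX: "(st X, en X) \<in> (dadj X) ^^ m" using tree_walk[OF TX] by blast
  have a1: "(st (tprod A X), 2 * en A) \<in> (dadj (tprod A X)) ^^ nA"
    using relpow_map[OF _ wA, of "\<lambda>v. 2 * v" "tprod A X"] by simp
  have b1: "(st (tprod B X), 2 * en B) \<in> (dadj (tprod B X)) ^^ nB"
    using relpow_map[OF _ wB, of "\<lambda>v. 2 * v" "tprod B X"] by simp
  have a2: "(2 * en A, en (tprod A X)) \<in> (dadj (tprod A X)) ^^ m"
    using relpow_map[OF _ wX, of "glueY A X" "tprod A X"] by simp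
  have b2: "(2 * en B, en (tprod B X)) \<in> (dadj (tprod B X)) ^^ m"
    using relpow_map[OF _ wX, of "glueY B X" "tprod B X"] by simp
  have fE: "emap f ` edges (tprod A X) \<subseteq> edges (tprod B X)"
    and fs: "f (st (tprod A X)) = st (tprod B X)" and fe: "f (en (tprod A X)) = en (tprod B X)"
    using f unfolding hom_def by blast+
  have c1: "(st (tprod B X), f (2 * en A)) \<in> (dadj (tprod B X)) ^^ nA"
    using relpow_map[OF fE a1] fs by simp
  have c2: "(f (2 * en A), en (tprod B X)) \<in> (dadj (tprod B X)) ^^ m"
    using relpow_map[OF fE a2] fe by simp
  obtain \<phi> :: "nat \<Rightarrow> int" where phi: "\<forall>(u, a, v) \<in> edges (tprod B X). \<phi> v = \<phi> u + 1"
    using level[OF tprod_tree[OF TB TX]] by blast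
  have "\<phi> (en (tprod B X)) = \<phi> (st (tprod B X)) + int nA + int m"
    using level_relpow[OF phi c1] level_relpow[OF phi c2] by simp
  moreover have "\<phi> (en (tprod B X)) = \<phi> (st (tprod B X)) + int nB + int m"
    using level_relpow[OF phi b1] level_relpow[OF phi b2] by simp
  ultimately have "nA = nB" by simp
  then show ?thesis using glue_fixed[OF TB TX c1 _ c2] b1 by simp
qed

lemma star_fix:
  assumes TX: "is_tree X" and TA: "is_tree A" and TB: "is_tree B"
    and f: "hom (tprod X A) (tprod X B) f"
  shows "f (2 * en X) = 2 * en X"
proof -
  obtain n where wX: "(st X, en X) \<in> (dadj X) ^^ n" using tree_walk[OF TX] by blast
  obtain mA where wA: "(st A, en A) \<in> (dadj A) ^^ mA" using tree_walk[OF TA] by blast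
  have a1: "(st (tprod X A), 2 * en X) \<in> (dadj (tprod X A)) ^^ n"
    using relpow_map[OF _ wX, of "\<lambda>v. 2 * v" "tprod X A"] by simp
  have b1: "(st (tprod X B), 2 * en X) \<in> (dadj (tprod X B)) ^^ n"
    using relpow_map[OF _ wX, of "\<lambda>v. 2 * v" "tprod X B"] by simp
  have a2: "(2 * en X, en (tprod X A)) \<in> (dadj (tprod X A)) ^^ mA"
    using relpow_map[OF _ wA, of "glueY X A" "tprod X A"] by simp
  have fE: "emap f ` edges (tprod X A) \<subseteq> edges (tprod X B)"
    and fs: "f (st (tprod X A)) = st (tprod X B)" and fe: "f (en (tprod X A)) = en (tprod X B)"
    using f unfolding hom_def by blast+
  have c1: "(st (tprod X B), f (2 * en X)) \<in> (dadj (tprod X B)) ^^ n"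
    using relpow_map[OF fE a1] fs by simp
  have c2: "(f (2 * en X), en (tprod X B)) \<in> (dadj (tprod X B)) ^^ mA"
    using relpow_map[OF fE a2] fe by simp
  show ?thesis using glue_fixed[OF TX TB c1 b1 c2] .
qed

lemma gmap_upd[simp]:
  "gmap X (Y\<lparr>en := e\<rparr>) f = gmap X Y f" "gmap X (Y\<lparr>st := e\<rparr>) f = gmap X Y f"
  "gmap (X\<lparr>en := e\<rparr>) Y f = gmap X Y f" "gmap (X\<lparr>st := e\<rparr>) Y f = gmap X Y f"
  by (simp_all add: gmap_def)

lemma gmap_id: "gmap X X id" "gmap X X (\<lambda>x. x)"
  by (simp_all add: gmap_def emap_id)

lemma hom_upd_en: "hom S T f \<Longrightarrow> f e = e' \<Longrightarrow> hom (S\<lparr>en := e\<rparr>) (T\<lparr>en := e'\<rparr>) f"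
  by (simp add: hom_def)

lemma hom_upd_st: "hom S T f \<Longrightarrow> f e = e' \<Longrightarrow> hom (S\<lparr>st := e\<rparr>) (T\<lparr>st := e'\<rparr>) f"
  by (simp add: hom_def)

lemma id_plus: "heq (tprod (tprod A (tplus_u X)) X) (tprod A X)"
proof -
  define C where "C = tprod A (tplus_u X)"
  have C: "C = (tprod A X)\<lparr>en := 2 * en A\<rparr>" using tprod_plus C_def by simp
  have gC: "gmap C (tprod A X) id" using C gmap_id by simp
  have h1: "hom (tprod C X) (tprod A X)
      (\<lambda>w. if even w then id (w div 2) else glueY A X (w div 2))"
    by (rule tprod_hom_out[OF gC _ gmap_right]) (simp_all add: C)
  have gA: "gmap A (tprod C X) ((\<lambda>v. 2 * v) \<circ> (\<lambda>v. 2 * v))"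
  proof -
    have "gmap A C (\<lambda>v. 2 * v)" using gmap_left[of A X] C by simp
    then show ?thesis using gmap_comp gmap_left[of C X] by blast
  qed
  have h2: "hom (tprod A X) (tprod C X)
      (\<lambda>w. if even w then ((\<lambda>v. 2 * v) \<circ> (\<lambda>v. 2 * v)) (w div 2) else glueY C X (w div 2))"
    by (rule tprod_hom_out[OF gA _ gmap_right]) (simp_all add: C)
  show ?thesis unfolding heq_def C_def[symmetric] using h1 h2 by blast
qed

lemma id_star: "heq (tprod X (tprod (tstar_u X) A)) (tprod X A)"
proof -
  define D where "D = tprod (tstar_u X) A"
  have D: "D = (tprod X A)\<lparr>st := 2 * en X\<rparr>" using tprod_star D_def by simp
  have gD: "gmap D (tprod X A) id" using D gmap_id by simp
  have h1: "hom (tprod X D) (tprod X A)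
      (\<lambda>w. if even w then 2 * (w div 2) else id (w div 2))"
    by (rule tprod_hom_out[OF gmap_left _ gD]) (simp_all add: D)
  have gA: "gmap A (tprod X D) (glueY X D \<circ> glueY X A)"
  proof -
    have "gmap A D (glueY X A)" using gmap_right[of A X] D by simp
    then show ?thesis using gmap_comp gmap_right[of D X] by blast
  qed
  have gs: "glueY X D (2 * en X) = 2 * en X" by (simp add: glueY_def D)
  have h2: "hom (tprod X A) (tprod X D)
      (\<lambda>w. if even w then 2 * (w div 2) else (glueY X D \<circ> glueY X A) (w div 2))"
    by (rule tprod_hom_out[OF gmap_left _ gA]) (simp_all add: D gs[unfolded D])
  show ?thesis unfolding heq_def D_def[symmetric] using h1 h2 by blast
qed

theorem proposition4p9:
  fixes A B X :: "'l stree"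
  assumes "pruned A" and "pruned B" and "pruned X"
  shows "(iso (pmult A X) (pmult B X) \<longleftrightarrow> iso (pmult A (pplus X)) (pmult B (pplus X)))
       \<and> (iso (pmult X A) (pmult X B) \<longleftrightarrow> iso (pmult (pstar X) A) (pmult (pstar X) B))"
proof -
  have TA: "is_tree A" and TB: "is_tree B" and TX: "is_tree X"
    using assms by (auto simp: pruned_def)
  define Xp where "Xp = tplus_u X"
  define Xs where "Xs = tstar_u X"
  have TXp: "is_tree Xp" using tplus_tree[OF TX] Xp_def by simp
  have TXs: "is_tree Xs" using tstar_tree[OF TX] Xs_def by simp
  have pXp: "pruned (pplus X)" "heq (pplus X) Xp"
    using prune_props[OF TXp] unfolding pplus_def Xp_def by auto
  have pXs: "pruned (pstar X)" "heq (pstar X) Xs"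
    using prune_props[OF TXs] unfolding pstar_def Xs_def by auto
  have TpXp: "is_tree (pplus X)" and TpXs: "is_tree (pstar X)"
    using pXp pXs by (auto simp: pruned_def)
  note tt = tprod_tree
  have L1: "iso (pmult A X) (pmult B X) \<longleftrightarrow> heq (tprod A X) (tprod B X)"
    unfolding pmult_def using prune_iso_iff tt TA TB TX by blast
  have R1: "iso (pmult A (pplus X)) (pmult B (pplus X)) \<longleftrightarrow> heq (tprod A Xp) (tprod B Xp)"
  proof -
    have "iso (pmult A (pplus X)) (pmult B (pplus X)) \<longleftrightarrow> heq (tprod A (pplus X)) (tprod B (pplus X))"
      unfolding pmult_def using prune_iso_iff tt TA TB TpXp by blast
    moreover have "heq (tprod A (pplus X)) (tprod A Xp)" "heq (tprod B (pplus X)) (tprod B Xp)"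
      using heq_cong_right pXp(2) by blast+
    ultimately show ?thesis using heq_trans heq_sym by meson
  qed
  have K1: "heq (tprod A X) (tprod B X) \<longleftrightarrow> heq (tprod A Xp) (tprod B Xp)"
  proof
    assume "heq (tprod A X) (tprod B X)"
    then obtain f g where f: "hom (tprod A X) (tprod B X) f" and g: "hom (tprod B X) (tprod A X) g"
      unfolding heq_def by blast
    have "hom (tprod A Xp) (tprod B Xp) f"
      using hom_upd_en[OF f plus_fix[OF TA TB TX f]] unfolding Xp_def tprod_plus .
    moreover have "hom (tprod B Xp) (tprod A Xp) g"
      using hom_upd_en[OF g plus_fix[OF TB TA TX g]] unfolding Xp_def tprod_plus .
    ultimately show "heq (tprod A Xp) (tprod B Xp)" unfolding heq_def by blast
  next
    assume "heq (tprod A Xp) (tprod B Xp)"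
    then have "heq (tprod (tprod A Xp) X) (tprod (tprod B Xp) X)" by (rule heq_cong_left)
    then show "heq (tprod A X) (tprod B X)"
      using id_plus[of A X] id_plus[of B X] heq_trans heq_sym unfolding Xp_def by meson
  qed
  have L2: "iso (pmult X A) (pmult X B) \<longleftrightarrow> heq (tprod X A) (tprod X B)"
    unfolding pmult_def using prune_iso_iff tt TA TB TX by blast
  have R2: "iso (pmult (pstar X) A) (pmult (pstar X) B) \<longleftrightarrow> heq (tprod Xs A) (tprod Xs B)"
  proof -
    have "iso (pmult (pstar X) A) (pmult (pstar X) B) \<longleftrightarrow> heq (tprod (pstar X) A) (tprod (pstar X) B)"
      unfolding pmult_def using prune_iso_iff tt TA TB TpXs by blast
    moreover have "heq (tprod (pstar X) A) (tprod Xs A)" "heq (tprod (pstar X) B) (tprod Xs B)"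
      using heq_cong_left pXs(2) by blast+
    ultimately show ?thesis using heq_trans heq_sym by meson
  qed
  have K2: "heq (tprod X A) (tprod X B) \<longleftrightarrow> heq (tprod Xs A) (tprod Xs B)"
  proof
    assume "heq (tprod X A) (tprod X B)"
    then obtain f g where f: "hom (tprod X A) (tprod X B) f" and g: "hom (tprod X B) (tprod X A) g"
      unfolding heq_def by blast
    have "hom (tprod Xs A) (tprod Xs B) f"
      using hom_upd_st[OF f star_fix[OF TX TA TB f]] unfolding Xs_def tprod_star .
    moreover have "hom (tprod Xs B) (tprod Xs A) g"
      using hom_upd_st[OF g star_fix[OF TX TB TA g]] unfolding Xs_def tprod_star .
    ultimately show "heq (tprod Xs A) (tprod Xs B)" unfolding heq_def by blast
  next
    assume "heq (tprod Xs A) (tprod Xs B)"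
    then have "heq (tprod X (tprod Xs A)) (tprod X (tprod Xs B))" by (rule heq_cong_right)
    then show "heq (tprod X A) (tprod X B)"
      using id_star[of X A] id_star[of X B] heq_trans heq_sym unfolding Xs_def by meson
  qed
  show ?thesis using L1 R1 K1 L2 R2 K2 by blast
qed

end
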